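(* Let $0<\zeta\le1$, place a spike at the origin, and let $s^1,s^2,s^3$ be its three nearest samples for some sampling grid of spacing $\zeta$ (any relative position). Let $W^1,W^2$ be the corresponding wave functions. Then for $i=1,2$ and all $t\in\mathbb{R}^2$ with $\|t\|\ge10$, the absolute values of $W^i(t)$ and of each of its first and second partial derivatives at $t$ are bounded by $$g(t)=\frac{6\|t\|^2}{\zeta}\exp\!\Big(-\frac{\|t\|^2}{2}+\sqrt2\,\zeta\|t\|\Big),$$ and if moreover $10^{-2}\le\zeta\le1$ then $g(t)<2\cdot10^{-9}$ for all such $t$.
   Context: $K(t)=\exp(-\|t\|^2/2)$. The three nearest samples of a spike $t_0$: three vertices of a grid square of side $\zeta$ forming a right isosceles triangle with axis-parallel legs of length $\zeta$ that contains $t_0$. The waves of spike $t_0$ are the unique functions $W^i(u)=\kappa_iK(s^1-u)+\mu_iK(s^2-u)+\rho_iK(s^3-u)$ with $W^1(t_0)=0,\partial_xW^1(t_0)=1,\partial_yW^1(t_0)=0$ and $W^2(t_0)=0,\partial_xW^2(t_0)=0,\partial_yW^2(t_0)=1$; derivatives are with respect to $u$. *)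

theory Defs
  imports "HOL-Analysis.Analysis"
begin

text \<open>Points of the plane are pairs; the norm on real \<times> real is the Euclidean norm.\<close>

definition gaussK :: "real \<times> real \<Rightarrow> real" where
  "gaussK t = exp (- (norm t)\<^sup>2 / 2)"

definition wave :: "real \<Rightarrow> real \<Rightarrow> real \<Rightarrow> real \<times> real \<Rightarrow> real \<times> real \<Rightarrow> real \<times> real
    \<Rightarrow> real \<times> real \<Rightarrow> real" where
  "wave \<kappa> \<mu> \<rho> s1 s2 s3 u = \<kappa> * gaussK (s1 - u) + \<mu> * gaussK (s2 - u) + \<rho> * gaussK (s3 - u)"

definition dx :: "(real \<times> real \<Rightarrow> real) \<Rightarrow> real \<times> real \<Rightarrow> real" where
  "dx f u = deriv (\<lambda>x. f (x, snd u)) (fst u)"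

definition dy :: "(real \<times> real \<Rightarrow> real) \<Rightarrow> real \<times> real \<Rightarrow> real" where
  "dy f u = deriv (\<lambda>y. f (fst u, y)) (snd u)"

text \<open>Three nearest samples of a spike at t0: vertices of a right isosceles triangle with
  axis-parallel legs of length zeta (half of a grid square of side zeta) containing t0.\<close>
definition nearest_samples :: "real \<Rightarrow> real \<times> real \<Rightarrow> real \<times> real \<Rightarrow> real \<times> real \<Rightarrow> real \<times> real \<Rightarrow> bool" where
  "nearest_samples \<zeta> t0 s1 s2 s3 \<longleftrightarrow>
     (\<exists>c \<sigma>1 \<sigma>2. \<sigma>1 \<in> {-1, 1} \<and> \<sigma>2 \<in> {-1, 1} \<and>
        {s1, s2, s3} = {c, c + (\<sigma>1 * \<zeta>, 0), c + (0, \<sigma>2 * \<zeta>)}) \<and>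
     t0 \<in> convex hull {s1, s2, s3}"

definition gbound :: "real \<Rightarrow> real \<times> real \<Rightarrow> real" where
  "gbound \<zeta> t = 6 * (norm t)\<^sup>2 / \<zeta> * exp (- (norm t)\<^sup>2 / 2 + sqrt 2 * \<zeta> * norm t)"

end

theory Submission imports Defs begin


definition E0 :: "real \<Rightarrow> real \<Rightarrow> real \<Rightarrow> real \<Rightarrow> real" where
  "E0 p q x y = exp (-((p-x)^2+(q-y)^2)/2)"
definition "Fx p q x y = (p-x) * E0 p q x y"
definition "Fy p q x y = (q-y) * E0 p q x y"
definition "Exx p q x y = ((p-x)^2 - 1) * E0 p q x y"
definition "Exy p q x y = ((p-x)*(q-y)) * E0 p q x y"
definition "Eyy p q x y = ((q-y)^2 - 1) * E0 p q x y"

definition S3 :: "real\<Rightarrow>real\<Rightarrow>real\<Rightarrow>real\<Rightarrow>real\<Rightarrow>real\<Rightarrow>real\<Rightarrow>real\<Rightarrow>real\<Rightarrow>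
   (real\<Rightarrow>real\<Rightarrow>real\<Rightarrow>real\<Rightarrow>real)\<Rightarrow>real\<times>real\<Rightarrow>real" where
  "S3 k m r p1 q1 p2 q2 p3 q3 T u = k * T p1 q1 (fst u) (snd u) + m * T p2 q2 (fst u) (snd u) + r * T p3 q3 (fst u) (snd u)"

lemma dx_S3:
  assumes "\<And>p q x y. ((\<lambda>x. T p q x y) has_real_derivative T' p q x y) (at x)"
  shows "dx (S3 k m r p1 q1 p2 q2 p3 q3 T) = S3 k m r p1 q1 p2 q2 p3 q3 T'"
proof
  fix u
  show "dx (S3 k m r p1 q1 p2 q2 p3 q3 T) u = S3 k m r p1 q1 p2 q2 p3 q3 T' u"
    unfolding dx_def S3_def fst_conv snd_conv
    by (intro DERIV_imp_deriv DERIV_add DERIV_cmult assms)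
qed

lemma dy_S3:
  assumes "\<And>p q x y. ((\<lambda>y. T p q x y) has_real_derivative T' p q x y) (at y)"
  shows "dy (S3 k m r p1 q1 p2 q2 p3 q3 T) = S3 k m r p1 q1 p2 q2 p3 q3 T'"
proof
  fix u
  show "dy (S3 k m r p1 q1 p2 q2 p3 q3 T) u = S3 k m r p1 q1 p2 q2 p3 q3 T' u"
    unfolding dy_def S3_def fst_conv snd_conv
    by (intro DERIV_imp_deriv DERIV_add DERIV_cmult assms)
qed

lemma dE0x: "((\<lambda>x. E0 p q x y) has_real_derivative Fx p q x y) (at x)"
  unfolding Fx_def E0_def by (auto intro!: derivative_eq_intros simp: field_simps)
lemma dE0y: "((\<lambda>y. E0 p q x y) has_real_derivative Fy p q x y) (at y)"
  unfolding Fy_def E0_def by (auto intro!: derivative_eq_intros simp: field_simps)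
lemma dExx: "((\<lambda>x. Fx p q x y) has_real_derivative Exx p q x y) (at x)"
  unfolding Fx_def Exx_def by (auto intro!: derivative_eq_intros dE0x simp: Fx_def algebra_simps power2_eq_square)
lemma dExy: "((\<lambda>y. Fx p q x y) has_real_derivative Exy p q x y) (at y)"
  unfolding Fx_def Exy_def by (auto intro!: derivative_eq_intros dE0y simp: Fy_def algebra_simps power2_eq_square)
lemma dEyx: "((\<lambda>x. Fy p q x y) has_real_derivative Exy p q x y) (at x)"
  unfolding Fy_def Exy_def by (auto intro!: derivative_eq_intros dE0x simp: Fx_def algebra_simps power2_eq_square)
lemma dEyy: "((\<lambda>y. Fy p q x y) has_real_derivative Eyy p q x y) (at y)"
  unfolding Fy_def Eyy_def by (auto intro!: derivative_eq_intros dE0y simp: Fy_def algebra_simps power2_eq_square)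

lemma wave_S3: "wave k m r (p1,q1) (p2,q2) (p3,q3) = S3 k m r p1 q1 p2 q2 p3 q3 E0"
proof
  fix u :: "real \<times> real"
  obtain x y where u: "u = (x,y)" by (cases u)
  show "wave k m r (p1,q1) (p2,q2) (p3,q3) u = S3 k m r p1 q1 p2 q2 p3 q3 E0 u"
    by (simp add: u wave_def S3_def gaussK_def E0_def norm_Pair)
qed



lemma E0_split: "E0 p q x y = E0 p q 0 0 * exp (p*x+q*y - (x^2+y^2)/2)"
  unfolding E0_def by (simp add: exp_add[symmetric] power2_eq_square field_simps)

lemma cs: "p*x+q*y \<le> sqrt (p^2+q^2) * sqrt (x^2+y^2)"
proof -
  have "(p*x+q*y)^2 \<le> (p^2+q^2)*(x^2+y^2)"
    using sum_squares_ge_zero[of "p*y-q*x" 0] by (simp add: power2_eq_square algebra_simps)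
  hence "sqrt ((p*x+q*y)^2) \<le> sqrt ((p^2+q^2)*(x^2+y^2))" by (rule real_sqrt_le_mono)
  thus ?thesis by (simp add: real_sqrt_mult)
qed

lemma term_bound:
  assumes c: "\<bar>c * E0 p q 0 0\<bar> \<le> 1/\<zeta>" and pq: "sqrt (p^2+q^2) \<le> sqrt 2 * \<zeta>"
    and z: "0<\<zeta>" and P: "\<bar>P\<bar> \<le> 2*(x^2+y^2)"
  shows "\<bar>c * (P * E0 p q x y)\<bar> \<le> 2*(x^2+y^2)/\<zeta> * exp (-(x^2+y^2)/2 + sqrt 2 * \<zeta> * sqrt (x^2+y^2))"
proof -
  have "p*x+q*y \<le> sqrt 2 * \<zeta> * sqrt (x^2+y^2)"
  proof -
    have "sqrt (p^2+q^2) * sqrt (x^2+y^2) \<le> sqrt 2 * \<zeta> * sqrt (x^2+y^2)"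
      by (rule mult_right_mono[OF pq]) simp
    thus ?thesis using cs[of p x q y] by linarith
  qed
  hence "p*x+q*y - (x^2+y^2)/2 \<le> -(x^2+y^2)/2 + sqrt 2 * \<zeta> * sqrt (x^2+y^2)"
    by linarith
  hence e: "exp (p*x+q*y - (x^2+y^2)/2) \<le> exp (-(x^2+y^2)/2 + sqrt 2 * \<zeta> * sqrt (x^2+y^2))"
    by (simp only: exp_le_cancel_iff)
  have "\<bar>c * (P * E0 p q x y)\<bar> = \<bar>c * E0 p q 0 0\<bar> * \<bar>P\<bar> * exp (p*x+q*y - (x^2+y^2)/2)"
    by (subst E0_split) (simp add: abs_mult)
  also have "\<dots> \<le> (1/\<zeta>) * (2*(x^2+y^2)) * exp (-(x^2+y^2)/2 + sqrt 2 * \<zeta> * sqrt (x^2+y^2))"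
    by (intro mult_mono c P e) (use z in auto)
  finally show ?thesis by simp
qed

lemma poly_bounds:
  assumes pq: "sqrt (p^2+q^2) \<le> sqrt 2" and R: "10 \<le> sqrt (x^2+y^2)"
  shows "\<bar>1\<bar> \<le> 2*(x^2+y^2)" "\<bar>p-x\<bar> \<le> 2*(x^2+y^2)" "\<bar>q-y\<bar> \<le> 2*(x^2+y^2)"
    "\<bar>(p-x)^2-1\<bar> \<le> 2*(x^2+y^2)" "\<bar>(q-y)^2-1\<bar> \<le> 2*(x^2+y^2)"
    "\<bar>(p-x)*(q-y)\<bar> \<le> 2*(x^2+y^2)"
proof -
  define r where "r = sqrt (x^2+y^2)"
  define d where "d = sqrt ((p-x)^2+(q-y)^2)"
  have r2: "x^2+y^2 = r^2" unfolding r_def by simp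
  have d2: "(p-x)^2+(q-y)^2 = d^2" unfolding d_def by simp
  have "norm ((p,q)-(x,y)) \<le> norm (p,q) + norm (x,y)" by (rule norm_triangle_ineq4)
  hence "d \<le> sqrt (p^2+q^2) + r" by (simp add: d_def r_def norm_Pair)
  moreover have "sqrt 2 \<le> 3/2" by (rule real_le_lsqrt) (auto simp: power2_eq_square)
  ultimately have dr: "d \<le> 3/2 + r" using pq by linarith
  have d0: "0 \<le> d" unfolding d_def by simp
  have r10: "10 \<le> r" using R r_def by simp
  have ax: "\<bar>p-x\<bar> \<le> d" unfolding d_def by (rule real_le_rsqrt) simp
  have ay: "\<bar>q-y\<bar> \<le> d" unfolding d_def by (rule real_le_rsqrt) simp
  define s where "s = (3/2+r)^2"
  have dd: "d^2 \<le> s" unfolding s_def using dr d0 by (intro power_mono) auto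
  have rr: "10*r \<le> r*r" using r10 by (intro mult_right_mono) auto
  have e1: "(3/2+r)^2 + 1 = r*r + 3*r + 13/4" "r^2 = r*r" by (simp_all add: power2_eq_square field_simps)
  have key: "s + 1 \<le> 2*r^2" unfolding s_def using rr r10 e1 by linarith
  have t1: "3/2+r \<le> s" unfolding s_def using rr r10 e1 by linarith
  show "\<bar>1\<bar> \<le> 2*(x^2+y^2)" using rr r10 r2 e1 by (simp only: abs_one)
  show "\<bar>p-x\<bar> \<le> 2*(x^2+y^2)" unfolding r2 using ax dr key t1 by linarith
  show "\<bar>q-y\<bar> \<le> 2*(x^2+y^2)" unfolding r2 using ay dr key t1 by linarith
  have px: "(p-x)^2 \<le> d^2" "(q-y)^2 \<le> d^2"
    unfolding d2[symmetric] by (simp_all add: add_increasing add_increasing2)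
  show "\<bar>(p-x)^2-1\<bar> \<le> 2*(x^2+y^2)" unfolding r2 abs_le_iff using px dd key zero_le_power2[of d] zero_le_power2[of "p-x"] by linarith
  show "\<bar>(q-y)^2-1\<bar> \<le> 2*(x^2+y^2)" unfolding r2 abs_le_iff using px dd key zero_le_power2[of d] zero_le_power2[of "q-y"] by linarith
  have "\<bar>(p-x)*(q-y)\<bar> \<le> d^2"
    using mult_mono[OF ax ay] d0 by (simp add: abs_mult power2_eq_square)
  then show "\<bar>(p-x)*(q-y)\<bar> \<le> 2*(x^2+y^2)" unfolding r2 using dd key by linarith
qed



lemma hull_norm:
  fixes a b c :: "real \<times> real"
  assumes "0 \<in> convex hull {a,b,c}" "norm (a-b) \<le> D" "norm (a-c) \<le> D"
  shows "norm a \<le> D"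
proof -
  obtain u v w where uvw: "0 = u *\<^sub>R a + v *\<^sub>R b + w *\<^sub>R c" "0 \<le> u" "0 \<le> v" "0 \<le> w" "u+v+w = 1"
    using assms(1) unfolding convex_hull_3 by auto
  have "a = (u+v+w) *\<^sub>R a - (u *\<^sub>R a + v *\<^sub>R b + w *\<^sub>R c)" using uvw by simp
  also have "\<dots> = v *\<^sub>R (a-b) + w *\<^sub>R (a-c)" by (simp add: algebra_simps)
  finally have "norm a = norm (v *\<^sub>R (a-b) + w *\<^sub>R (a-c))" by simp
  also have "\<dots> \<le> v * norm (a-b) + w * norm (a-c)"
    using norm_triangle_ineq[of "v *\<^sub>R (a-b)" "w *\<^sub>R (a-c)"] uvw by simp
  also have "\<dots> \<le> v * D + w * D" using assms uvw by (intro add_mono mult_left_mono) auto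
  also have "\<dots> \<le> D"
  proof -
    have D0: "0 \<le> D" using assms(2) norm_ge_zero[of "a-b"] by linarith
    have "(v+w)*D \<le> 1*D" by (rule mult_right_mono) (use uvw D0 in auto)
    thus ?thesis by (simp add: distrib_right)
  qed
  finally show ?thesis .
qed

lemma core:
  fixes P Q R c :: "real \<times> real"
  assumes "P = c" "Q = c + (s1*z, 0)" "R = c + (0, s2*z)" "s1 \<in> {-1,1}" "s2 \<in> {-1,1}" "0 < z"
    "b1+b2+b3 = 0" "b1 * fst P + b2 * fst Q + b3 * fst R = vx"
    "b1 * snd P + b2 * snd Q + b3 * snd R = vy" "vx * vy = 0" "\<bar>vx\<bar> \<le> 1" "\<bar>vy\<bar> \<le> 1"
  shows "\<bar>b1\<bar> \<le> 1/z \<and> \<bar>b2\<bar> \<le> 1/z \<and> \<bar>b3\<bar> \<le> 1/z"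
proof -
  have h1: "(b1+b2+b3) * fst c = 0" "(b1+b2+b3) * snd c = 0" using assms(7) by auto
  have ex: "b2 * s1 * z = vx" using assms(1,2,3,8) h1 by (simp add: algebra_simps)
  have ey: "b3 * s2 * z = vy" using assms(1,2,3,9) h1 by (simp add: algebra_simps)
  have a1: "\<bar>s1\<bar> = 1" "\<bar>s2\<bar> = 1" using assms(4,5) by auto
  have "\<bar>b2\<bar> * z = \<bar>vx\<bar>" using ex a1 assms(6) by (metis abs_mult abs_of_pos mult.right_neutral mult.commute)
  hence B2: "\<bar>b2\<bar> * z \<le> 1" using assms(11) by simp
  have "\<bar>b3\<bar> * z = \<bar>vy\<bar>" using ey a1 assms(6) by (metis abs_mult abs_of_pos mult.right_neutral mult.commute)
  hence B3: "\<bar>b3\<bar> * z \<le> 1" using assms(12) by simp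
  have "vx = 0 \<or> vy = 0" using assms(10) by simp
  hence B1: "\<bar>b1\<bar> * z \<le> 1"
  proof
    assume "vx = 0"
    hence "b2 = 0" using ex a1 assms(6) by auto
    hence "b1 = -b3" using assms(7) by simp
    thus ?thesis using B3 by simp
  next
    assume "vy = 0"
    hence "b3 = 0" using ey a1 assms(6) by auto
    hence "b1 = -b2" using assms(7) by simp
    thus ?thesis using B2 by simp
  qed
  show ?thesis using B1 B2 B3 assms(6) by (simp add: pos_le_divide_eq mult.commute)
qed

lemma sqrt2z: "0 < z \<Longrightarrow> sqrt (z^2 + z^2) = sqrt 2 * (z::real)"
proof -
  assume z: "0 < z"
  have "z^2+z^2 = 2 * z^2" by simp
  hence "sqrt (z^2 + z^2) = sqrt 2 * sqrt (z^2)" by (simp only: real_sqrt_mult)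
  thus ?thesis using z by simp
qed

lemma geo:
  assumes ns: "nearest_samples \<zeta> (0,0) s1 s2 s3" and z: "0 < \<zeta>"
  shows "norm s1 \<le> sqrt 2 * \<zeta> \<and> norm s2 \<le> sqrt 2 * \<zeta> \<and> norm s3 \<le> sqrt 2 * \<zeta>"
    and "\<And>a1 a2 a3 vx vy. a1+a2+a3 = 0 \<Longrightarrow> a1 * fst s1 + a2 * fst s2 + a3 * fst s3 = vx \<Longrightarrow>
      a1 * snd s1 + a2 * snd s2 + a3 * snd s3 = vy \<Longrightarrow> vx * vy = 0 \<Longrightarrow> \<bar>vx\<bar> \<le> 1 \<Longrightarrow> \<bar>vy\<bar> \<le> 1 \<Longrightarrow>
      \<bar>a1\<bar> \<le> 1/\<zeta> \<and> \<bar>a2\<bar> \<le> 1/\<zeta> \<and> \<bar>a3\<bar> \<le> 1/\<zeta>"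
proof -
  obtain c s1' s2' where sig: "s1' \<in> {-1,1}" "s2' \<in> {-1,1}"
    and seq: "{s1,s2,s3} = {c, c + (s1'*\<zeta>, 0), c + (0, s2'*\<zeta>)}"
    and hull: "(0,0) \<in> convex hull {s1,s2,s3}"
    using ns unfolding nearest_samples_def by blast
  define P where "P = c"
  define Q where "Q = c + (s1'*\<zeta>, 0)"
  define R where "R = c + (0, s2'*\<zeta>)"
  have s2: "sqrt 2 \<ge> 1" by simp
  have z2: "\<zeta> \<le> sqrt 2 * \<zeta>" using s2 z by simp
  have pd: "\<forall>x\<in>{P,Q,R}. \<forall>y\<in>{P,Q,R}. norm (x-y) \<le> sqrt 2 * \<zeta>"
  proof -
    have a: "norm (P-Q) = \<zeta>" "norm (Q-P) = \<zeta>" "norm (P-R) = \<zeta>" "norm (R-P) = \<zeta>"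
      using sig z by (auto simp: P_def Q_def R_def)
    have "(s1'*\<zeta>)^2 = \<zeta>^2" "(s2'*\<zeta>)^2 = \<zeta>^2" using sig by (auto simp: power_mult_distrib)
    hence b: "norm (Q-R) = sqrt 2 * \<zeta>" "norm (R-Q) = sqrt 2 * \<zeta>"
      using sqrt2z[OF z] by (simp_all add: P_def Q_def R_def norm_Pair)
    show ?thesis using a b z2 by auto
  qed
  have dist: "P \<noteq> Q" "P \<noteq> R" "Q \<noteq> R" using sig z
    by (auto simp: P_def Q_def R_def zero_prod_def)
  have seq': "{s1,s2,s3} = {P,Q,R}" using seq by (simp add: P_def Q_def R_def)
  have mem: "s1 \<in> {P,Q,R}" "s2 \<in> {P,Q,R}" "s3 \<in> {P,Q,R}" using seq' by auto
  have h0: "0 \<in> convex hull {s1,s2,s3}" using hull by (simp add: zero_prod_def)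
  have n1: "norm s1 \<le> sqrt 2 * \<zeta>"
    using hull_norm[OF h0, of "sqrt 2 * \<zeta>"] pd mem by blast
  have n2: "norm s2 \<le> sqrt 2 * \<zeta>"
  proof -
    have "0 \<in> convex hull {s2,s1,s3}" using h0 by (simp add: insert_commute)
    thus ?thesis using hull_norm[of s2 s1 s3 "sqrt 2 * \<zeta>"] pd mem by blast
  qed
  have n3: "norm s3 \<le> sqrt 2 * \<zeta>"
  proof -
    have "0 \<in> convex hull {s3,s1,s2}" using h0 by (simp add: insert_commute)
    thus ?thesis using hull_norm[of s3 s1 s2 "sqrt 2 * \<zeta>"] pd mem by blast
  qed
  show "norm s1 \<le> sqrt 2 * \<zeta> \<and> norm s2 \<le> sqrt 2 * \<zeta> \<and> norm s3 \<le> sqrt 2 * \<zeta>"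
    using n1 n2 n3 by blast
  have inv: "P \<in> {s1,s2,s3}" "Q \<in> {s1,s2,s3}" "R \<in> {s1,s2,s3}" using seq' by auto
  have perm: "(s1 = P \<and> s2 = Q \<and> s3 = R) \<or> (s1 = P \<and> s2 = R \<and> s3 = Q) \<or>
     (s1 = Q \<and> s2 = P \<and> s3 = R) \<or> (s1 = Q \<and> s2 = R \<and> s3 = P) \<or>
     (s1 = R \<and> s2 = P \<and> s3 = Q) \<or> (s1 = R \<and> s2 = Q \<and> s3 = P)"
    using inv dist by auto
  note C = core[OF P_def Q_def R_def sig z]
  fix a1 a2 a3 vx vy
  assume e: "a1+a2+a3 = 0" "a1 * fst s1 + a2 * fst s2 + a3 * fst s3 = vx"
      "a1 * snd s1 + a2 * snd s2 + a3 * snd s3 = vy" "vx * vy = 0" "\<bar>vx\<bar> \<le> 1" "\<bar>vy\<bar> \<le> 1"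
  show "\<bar>a1\<bar> \<le> 1/\<zeta> \<and> \<bar>a2\<bar> \<le> 1/\<zeta> \<and> \<bar>a3\<bar> \<le> 1/\<zeta>"
    using perm
  proof (elim disjE conjE)
    assume "s1 = P" "s2 = Q" "s3 = R" thus ?thesis using C[of a1 a2 a3 vx vy] e by simp
  next
    assume "s1 = P" "s2 = R" "s3 = Q" thus ?thesis using C[of a1 a3 a2 vx vy] e by (simp add: ac_simps)
  next
    assume "s1 = Q" "s2 = P" "s3 = R" thus ?thesis using C[of a2 a1 a3 vx vy] e by (simp add: ac_simps)
  next
    assume "s1 = Q" "s2 = R" "s3 = P" thus ?thesis using C[of a3 a1 a2 vx vy] e by (simp add: ac_simps)
  next
    assume "s1 = R" "s2 = P" "s3 = Q" thus ?thesis using C[of a2 a3 a1 vx vy] e by (simp add: ac_simps)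
  next
    assume "s1 = R" "s2 = Q" "s3 = P" thus ?thesis using C[of a3 a2 a1 vx vy] e by (simp add: ac_simps)
  qed
qed



lemma exp35: "(5/2::real)^35 \<le> exp 35"
proof -
  have "5/2 \<le> exp (1::real)" using exp_lower_Taylor_quadratic[of 1] by simp
  hence "(5/2::real)^35 \<le> exp 1 ^ 35" by (rule power_mono) simp
  also have "\<dots> = exp 35" using exp_of_nat_mult[of 35 "1::real"] by simp
  finally show ?thesis .
qed

lemma numeric:
  assumes z1: "10 powr (-2) \<le> \<zeta>" and z2: "\<zeta> \<le> 1" and R: "10 \<le> norm t"
  shows "gbound \<zeta> t < 2 * 10 powr (-9)"
proof -
  define r where "r = norm t"
  define d where "d = r - 10"
  have d0: "0 \<le> d" using R by (simp add: d_def r_def)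
  have p2: "(10::real) powr (-2) = 1/100" by (simp add: powr_minus)
  have p9: "(10::real) powr (-9) = 1/10^9" by (simp add: powr_minus)
  have zpos: "1/100 \<le> \<zeta>" using z1 p2 by simp
  have c6: "6 / \<zeta> \<le> 600" using zpos by (simp add: divide_le_eq)
  have "sqrt 2 \<le> 3/2" by (rule real_le_lsqrt) (auto simp: power2_eq_square)
  hence sz: "sqrt 2 * \<zeta> \<le> 3/2" using z2 zpos
  proof -
    have "sqrt 2 * \<zeta> \<le> sqrt 2 * 1" by (rule mult_left_mono[OF z2]) simp
    thus ?thesis using \<open>sqrt 2 \<le> 3/2\<close> by linarith
  qed
  have ex1: "-(r^2)/2 + sqrt 2 * \<zeta> * r \<le> -(r^2)/2 + 3/2 * r"
  proof -
    have "sqrt 2 * \<zeta> * r \<le> 3/2 * r" by (rule mult_right_mono[OF sz]) (simp add: r_def)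
    thus ?thesis by linarith
  qed
  have r2: "r^2 \<le> 100 * exp (d/5)"
  proof -
    have "1 + d/10 \<le> exp (d/10)" by (rule exp_ge_add_one_self)
    hence "(1 + d/10)^2 \<le> exp (d/10)^2" by (rule power_mono) (use d0 in simp)
    also have "\<dots> = exp (d/5)" by (simp add: exp_double[symmetric] power2_eq_square exp_add[symmetric])
    finally have "(1+d/10)^2 \<le> exp (d/5)" .
    moreover have "r^2 = 100 * (1+d/10)^2" by (simp add: d_def power2_eq_square field_simps)
    ultimately show ?thesis by simp
  qed
  have ee: "d/5 + (-(r^2)/2 + 3/2 * r) \<le> -35"
  proof -
    have "d/5 + (-(r^2)/2 + 3/2 * r) = -35 - (83/10) * d - d^2/2"
      by (simp add: d_def power2_eq_square field_simps)
    thus ?thesis using d0 zero_le_power2[of d] by linarith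
  qed
  have g: "gbound \<zeta> t = 6/\<zeta> * r^2 * exp (-(r^2)/2 + sqrt 2 * \<zeta> * r)"
    by (simp add: gbound_def r_def)
  also have "\<dots> \<le> 600 * (100 * exp (d/5)) * exp (-(r^2)/2 + 3/2 * r)"
    using c6 r2 ex1 zpos by (intro mult_mono) auto
  also have "\<dots> = 60000 * exp (d/5 + (-(r^2)/2 + 3/2 * r))" by (simp add: exp_add)
  also have "\<dots> \<le> 60000 * exp (-35)" using ee by simp
  also have "\<dots> < 2 * (1/10^9)"
  proof -
    have "60000 * 10^9 < 2 * (5/2::real)^35" by (simp add: power_divide)
    also have "\<dots> \<le> 2 * exp 35" using exp35 by simp
    finally have "60000 * 10^9 < 2 * exp (35::real)" .
    thus ?thesis by (simp add: exp_minus field_simps)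
  qed
  finally show ?thesis using p9 by simp
qed


lemma S3_bound:
  assumes TP: "\<And>p q. T p q x y = Pf p q * E0 p q x y"
    and PB: "\<And>p q. sqrt (p^2+q^2) \<le> sqrt 2 \<Longrightarrow> \<bar>Pf p q\<bar> \<le> 2*(x^2+y^2)"
    and c1: "\<bar>k * E0 p1 q1 0 0\<bar> \<le> 1/\<zeta>" and c2: "\<bar>m * E0 p2 q2 0 0\<bar> \<le> 1/\<zeta>"
    and c3: "\<bar>r * E0 p3 q3 0 0\<bar> \<le> 1/\<zeta>"
    and n1: "sqrt (p1^2+q1^2) \<le> sqrt 2 * \<zeta>" and n2: "sqrt (p2^2+q2^2) \<le> sqrt 2 * \<zeta>"
    and n3: "sqrt (p3^2+q3^2) \<le> sqrt 2 * \<zeta>" and z: "0 < \<zeta>" "\<zeta> \<le> 1"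
  shows "\<bar>S3 k m r p1 q1 p2 q2 p3 q3 T (x,y)\<bar> \<le> 6*(x^2+y^2)/\<zeta> * exp (-(x^2+y^2)/2 + sqrt 2 * \<zeta> * sqrt (x^2+y^2))"
proof -
  have zz: "sqrt 2 * \<zeta> \<le> sqrt 2" using z by simp
  have b1: "\<bar>k * (Pf p1 q1 * E0 p1 q1 x y)\<bar> \<le> 2*(x^2+y^2)/\<zeta> * exp (-(x^2+y^2)/2 + sqrt 2 * \<zeta> * sqrt (x^2+y^2))"
    by (rule term_bound[OF c1 n1 z(1) PB]) (use n1 zz in linarith)
  have b2: "\<bar>m * (Pf p2 q2 * E0 p2 q2 x y)\<bar> \<le> 2*(x^2+y^2)/\<zeta> * exp (-(x^2+y^2)/2 + sqrt 2 * \<zeta> * sqrt (x^2+y^2))"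
    by (rule term_bound[OF c2 n2 z(1) PB]) (use n2 zz in linarith)
  have b3: "\<bar>r * (Pf p3 q3 * E0 p3 q3 x y)\<bar> \<le> 2*(x^2+y^2)/\<zeta> * exp (-(x^2+y^2)/2 + sqrt 2 * \<zeta> * sqrt (x^2+y^2))"
    by (rule term_bound[OF c3 n3 z(1) PB]) (use n3 zz in linarith)
  have "\<bar>S3 k m r p1 q1 p2 q2 p3 q3 T (x,y)\<bar> \<le> \<bar>k * (Pf p1 q1 * E0 p1 q1 x y)\<bar> + \<bar>m * (Pf p2 q2 * E0 p2 q2 x y)\<bar> + \<bar>r * (Pf p3 q3 * E0 p3 q3 x y)\<bar>"
    unfolding S3_def fst_conv snd_conv TP by linarith
  also have "\<dots> \<le> 3 * (2*(x^2+y^2)/\<zeta> * exp (-(x^2+y^2)/2 + sqrt 2 * \<zeta> * sqrt (x^2+y^2)))"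
    using b1 b2 b3 by linarith
  also have "\<dots> = 6*(x^2+y^2)/\<zeta> * exp (-(x^2+y^2)/2 + sqrt 2 * \<zeta> * sqrt (x^2+y^2))"
    by (simp add: field_simps)
  finally show ?thesis .
qed

lemma derivs:
  fixes k m r p1 q1 p2 q2 p3 q3 :: real
  defines "F \<equiv> S3 k m r p1 q1 p2 q2 p3 q3"
  shows "dx (F E0) = F Fx" "dy (F E0) = F Fy" "dx (dx (F E0)) = F Exx" "dx (dy (F E0)) = F Exy"
    "dy (dx (F E0)) = F Exy" "dy (dy (F E0)) = F Eyy"
  unfolding F_def
  by (simp_all only: dx_S3[OF dE0x] dy_S3[OF dE0y] dx_S3[OF dExx] dy_S3[OF dExy] dx_S3[OF dEyx] dy_S3[OF dEyy])

lemma derivs2: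
  "dx (S3 k m r p1 q1 p2 q2 p3 q3 Fx) = S3 k m r p1 q1 p2 q2 p3 q3 Exx"
  "dy (S3 k m r p1 q1 p2 q2 p3 q3 Fx) = S3 k m r p1 q1 p2 q2 p3 q3 Exy"
  "dx (S3 k m r p1 q1 p2 q2 p3 q3 Fy) = S3 k m r p1 q1 p2 q2 p3 q3 Exy"
  "dy (S3 k m r p1 q1 p2 q2 p3 q3 Fy) = S3 k m r p1 q1 p2 q2 p3 q3 Eyy"
  by (simp_all only: dx_S3[OF dExx] dy_S3[OF dExy] dx_S3[OF dEyx] dy_S3[OF dEyy])

lemma wave_bounds:
  assumes c1: "\<bar>k * E0 p1 q1 0 0\<bar> \<le> 1/\<zeta>" and c2: "\<bar>m * E0 p2 q2 0 0\<bar> \<le> 1/\<zeta>"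
    and c3: "\<bar>r * E0 p3 q3 0 0\<bar> \<le> 1/\<zeta>"
    and n1: "sqrt (p1^2+q1^2) \<le> sqrt 2 * \<zeta>" and n2: "sqrt (p2^2+q2^2) \<le> sqrt 2 * \<zeta>"
    and n3: "sqrt (p3^2+q3^2) \<le> sqrt 2 * \<zeta>" and z: "0 < \<zeta>" "\<zeta> \<le> 1"
    and W: "W = S3 k m r p1 q1 p2 q2 p3 q3 E0"
  shows "\<forall>t. norm t \<ge> 10 \<longrightarrow>
            (\<forall>D \<in> {W, dx W, dy W, dx (dx W), dx (dy W), dy (dx W), dy (dy W)}.
               \<bar>D t\<bar> \<le> gbound \<zeta> t)"
proof (intro allI impI)
  fix t :: "real \<times> real"
  assume t: "norm t \<ge> 10"
  obtain x y where txy: "t = (x,y)" by (cases t)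
  have R: "10 \<le> sqrt (x^2+y^2)" using t by (simp add: txy norm_Pair)
  have g: "gbound \<zeta> t = 6*(x^2+y^2)/\<zeta> * exp (-(x^2+y^2)/2 + sqrt 2 * \<zeta> * sqrt (x^2+y^2))"
    by (simp add: gbound_def txy norm_Pair)
  note pb = poly_bounds[OF _ R]
  note SB = S3_bound[OF _ _ c1 c2 c3 n1 n2 n3 z]
  have h: "\<bar>S3 k m r p1 q1 p2 q2 p3 q3 T t\<bar> \<le> gbound \<zeta> t"
    if "T \<in> {E0, Fx, Fy, Exx, Exy, Eyy}" for T

  proof -
    from that consider "T = E0" | "T = Fx" | "T = Fy" | "T = Exx" | "T = Exy" | "T = Eyy" by blast
    then show ?thesis
    proof cases
      case 1 show ?thesis unfolding 1 g unfolding txy by (rule SB[of _ _ _ "\<lambda>p q. 1"]) (use poly_bounds(1)[OF _ R, of 0 0] in simp_all)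
    next
      case 2 show ?thesis unfolding 2 g unfolding txy by (rule SB[of _ _ _ "\<lambda>p q. p - x"]) (simp only: Fx_def, rule pb(2), assumption)
    next
      case 3 show ?thesis unfolding 3 g unfolding txy by (rule SB[of _ _ _ "\<lambda>p q. q - y"]) (simp only: Fy_def, rule pb(3), assumption)
    next
      case 4 show ?thesis unfolding 4 g unfolding txy by (rule SB[of _ _ _ "\<lambda>p q. (p - x)^2 - 1"]) (simp only: Exx_def, rule pb(4), assumption)
    next
      case 5 show ?thesis unfolding 5 g unfolding txy by (rule SB[of _ _ _ "\<lambda>p q. (p - x)*(q - y)"]) (simp only: Exy_def, rule pb(6), assumption)
    next
      case 6 show ?thesis unfolding 6 g unfolding txy by (rule SB[of _ _ _ "\<lambda>p q. (q - y)^2 - 1"]) (simp only: Eyy_def, rule pb(5), assumption)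
    qed
  qed
  show "\<forall>D \<in> {W, dx W, dy W, dx (dx W), dx (dy W), dy (dx W), dy (dy W)}. \<bar>D t\<bar> \<le> gbound \<zeta> t"
    unfolding W derivs derivs2 ball_simps by (intro conjI TrueI h; simp)
qed

theorem lemmaC6:
  fixes \<zeta> \<kappa>1 \<mu>1 \<rho>1 \<kappa>2 \<mu>2 \<rho>2 :: real
    and s1 s2 s3 :: "real \<times> real"
  defines "W1 \<equiv> wave \<kappa>1 \<mu>1 \<rho>1 s1 s2 s3"
      and "W2 \<equiv> wave \<kappa>2 \<mu>2 \<rho>2 s1 s2 s3"
  assumes "0 < \<zeta>" and "\<zeta> \<le> 1"
    and "nearest_samples \<zeta> (0, 0) s1 s2 s3"
    and "W1 (0, 0) = 0" and "dx W1 (0, 0) = 1" and "dy W1 (0, 0) = 0"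
    and "W2 (0, 0) = 0" and "dx W2 (0, 0) = 0" and "dy W2 (0, 0) = 1"
  shows "(\<forall>W \<in> {W1, W2}. \<forall>t. norm t \<ge> 10 \<longrightarrow>
            (\<forall>D \<in> {W, dx W, dy W, dx (dx W), dx (dy W), dy (dx W), dy (dy W)}.
               \<bar>D t\<bar> \<le> gbound \<zeta> t))
       \<and> (10 powr (-2) \<le> \<zeta> \<longrightarrow> (\<forall>t. norm t \<ge> 10 \<longrightarrow> gbound \<zeta> t < 2 * 10 powr (-9)))"
proof -
  obtain p1 q1 where s1: "s1 = (p1,q1)" by (cases s1)
  obtain p2 q2 where s2: "s2 = (p2,q2)" by (cases s2)
  obtain p3 q3 where s3: "s3 = (p3,q3)" by (cases s3)
  have W1: "W1 = S3 \<kappa>1 \<mu>1 \<rho>1 p1 q1 p2 q2 p3 q3 E0" unfolding W1_def s1 s2 s3 by (rule wave_S3)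
  have W2: "W2 = S3 \<kappa>2 \<mu>2 \<rho>2 p1 q1 p2 q2 p3 q3 E0" unfolding W2_def s1 s2 s3 by (rule wave_S3)
  note G = geo[OF assms(5) assms(3)]
  have ns: "sqrt (p1^2+q1^2) \<le> sqrt 2 * \<zeta>" "sqrt (p2^2+q2^2) \<le> sqrt 2 * \<zeta>" "sqrt (p3^2+q3^2) \<le> sqrt 2 * \<zeta>"
    using G(1) by (simp_all add: s1 s2 s3 norm_Pair)
  have C1: "\<bar>\<kappa>1 * E0 p1 q1 0 0\<bar> \<le> 1/\<zeta> \<and> \<bar>\<mu>1 * E0 p2 q2 0 0\<bar> \<le> 1/\<zeta> \<and> \<bar>\<rho>1 * E0 p3 q3 0 0\<bar> \<le> 1/\<zeta>"
  proof (rule G(2))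
    show "\<kappa>1 * E0 p1 q1 0 0 + \<mu>1 * E0 p2 q2 0 0 + \<rho>1 * E0 p3 q3 0 0 = 0"
      using assms(6) unfolding W1 by (simp add: S3_def)
    show "\<kappa>1 * E0 p1 q1 0 0 * fst s1 + \<mu>1 * E0 p2 q2 0 0 * fst s2 + \<rho>1 * E0 p3 q3 0 0 * fst s3 = 1"
      using assms(7) unfolding W1 derivs by (simp add: S3_def Fx_def s1 s2 s3 algebra_simps)
    show "\<kappa>1 * E0 p1 q1 0 0 * snd s1 + \<mu>1 * E0 p2 q2 0 0 * snd s2 + \<rho>1 * E0 p3 q3 0 0 * snd s3 = 0"
      using assms(8) unfolding W1 derivs by (simp add: S3_def Fy_def s1 s2 s3 algebra_simps)
  qed simp_all
  have C2: "\<bar>\<kappa>2 * E0 p1 q1 0 0\<bar> \<le> 1/\<zeta> \<and> \<bar>\<mu>2 * E0 p2 q2 0 0\<bar> \<le> 1/\<zeta> \<and> \<bar>\<rho>2 * E0 p3 q3 0 0\<bar> \<le> 1/\<zeta>"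
  proof (rule G(2))
    show "\<kappa>2 * E0 p1 q1 0 0 + \<mu>2 * E0 p2 q2 0 0 + \<rho>2 * E0 p3 q3 0 0 = 0"
      using assms(9) unfolding W2 by (simp add: S3_def)
    show "\<kappa>2 * E0 p1 q1 0 0 * fst s1 + \<mu>2 * E0 p2 q2 0 0 * fst s2 + \<rho>2 * E0 p3 q3 0 0 * fst s3 = 0"
      using assms(10) unfolding W2 derivs by (simp add: S3_def Fx_def s1 s2 s3 algebra_simps)
    show "\<kappa>2 * E0 p1 q1 0 0 * snd s1 + \<mu>2 * E0 p2 q2 0 0 * snd s2 + \<rho>2 * E0 p3 q3 0 0 * snd s3 = 1"
      using assms(11) unfolding W2 derivs by (simp add: S3_def Fy_def s1 s2 s3 algebra_simps)
  qed simp_all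
  have P1: "\<forall>t. norm t \<ge> 10 \<longrightarrow> (\<forall>D \<in> {W1, dx W1, dy W1, dx (dx W1), dx (dy W1), dy (dx W1), dy (dy W1)}. \<bar>D t\<bar> \<le> gbound \<zeta> t)"
    using C1 ns assms(3,4) by (intro wave_bounds[OF _ _ _ _ _ _ _ _ W1]) auto
  have P2: "\<forall>t. norm t \<ge> 10 \<longrightarrow> (\<forall>D \<in> {W2, dx W2, dy W2, dx (dx W2), dx (dy W2), dy (dx W2), dy (dy W2)}. \<bar>D t\<bar> \<le> gbound \<zeta> t)"
    using C2 ns assms(3,4) by (intro wave_bounds[OF _ _ _ _ _ _ _ _ W2]) auto
  show ?thesis using P1 P2 numeric assms(4) by blast
qed


end
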